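(* For every $i$, $s_{i+1}+r_{i+1}\leq s_i$.
   Context: Consider a finite rooted tree $T_0$ with node set $V_{\mathrm{int}}$; for a node $w$, $w'$ denotes its unique predecessor. Each node $v$ carries an integer $r_v$ (the exponential divergence rate of its multiplier $u_v$ as $t\to\infty$). Define recursively, starting from the end nodes (where $s_v:=0$), $s_v:=\sum_{w'=v}\max(0,n_w)$ and $n_v:=r_v+s_v$, computed in the original tree $T_0$. Build a sequence of trees: $T_0$ has root $v_0$; given $T_i$ with root $v_i$, choose a successor $v_{i+1}$ of $v_i$ in $T_i$ and form $T_{i+1}$ by contracting the line from $v_{i+1}$ to $v_i$: the node $v_i$ is erased, all subtrees originally entering $v_{i+1}$ are reattached to the root, together with the remaining subtrees entering $v_i$, and the root is renamed $v_{i+1}$ (carrying the multiplier $u_{v_{i+1}}$). Set $r_i:=r_{v_i}$ and $s_i:=\sum_{w\in T_i:\,w'=v_i}\max(0,n_w)$, where the sum is over the successors of the root $v_i$ in $T_i$ and the $n_w$ are those computed in $T_0$. *)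

theory Defs
  imports Main
begin

text \<open>A finite rooted tree is given by a finite node set V, a root rt \<in> V and a
predecessor function par (meaningful on V - {rt}); every node reaches the root
by iterating par.\<close>
definition rooted_tree :: "'a set \<Rightarrow> ('a \<Rightarrow> 'a) \<Rightarrow> 'a \<Rightarrow> bool" where
  "rooted_tree V par rt \<longleftrightarrow> finite V \<and> rt \<in> V \<and>
     (\<forall>w\<in>V. w \<noteq> rt \<longrightarrow> par w \<in> V) \<and>
     (\<forall>w\<in>V. \<exists>k. (par ^^ k) w = rt)"

definition succs :: "'a set \<Rightarrow> ('a \<Rightarrow> 'a) \<Rightarrow> 'a \<Rightarrow> 'a \<Rightarrow> 'a set" where
  "succs V par rt v = {w \<in> V. w \<noteq> rt \<and> par w = v}"

text \<open>Contraction of the edge from the root rt to its successor c: rt is erased,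
all successors of rt are re-attached to c, which becomes the new root.\<close>
definition contract_par :: "('a \<Rightarrow> 'a) \<Rightarrow> 'a \<Rightarrow> 'a \<Rightarrow> ('a \<Rightarrow> 'a)" where
  "contract_par par rt c = (\<lambda>w. if par w = rt then c else par w)"

end

theory Submission
  imports Defs
begin

lemma inv_lemma:
  fixes V0 :: "'a set" and par0 :: "'a \<Rightarrow> 'a" and v0 :: 'a
    and V :: "nat \<Rightarrow> 'a set" and P :: "nat \<Rightarrow> 'a \<Rightarrow> 'a" and v :: "nat \<Rightarrow> 'a"
    and m :: nat
  assumes tree: "rooted_tree V0 par0 v0"
    and start: "V 0 = V0" "P 0 = par0" "v 0 = v0"
    and steps: "\<forall>i<m. v (Suc i) \<in> succs (V i) (P i) (v i) (v i)
                    \<and> V (Suc i) = V i - {v i}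
                    \<and> P (Suc i) = contract_par (P i) (v i) (v (Suc i))"
  shows "j \<le> m \<Longrightarrow> V j \<subseteq> V0 \<and> v j \<in> V j \<and> v0 \<notin> V j - {v j} \<and>
     (\<forall>w\<in>V j - {v j}. P j w = (if par0 w \<in> V j - {v j} then par0 w else v j)) \<and>
     (\<forall>w\<in>V0 - (V j - {v j}). w \<noteq> v0 \<longrightarrow> par0 w \<in> V0 - (V j - {v j}))"
proof (induction j)
  case 0
  have pv: "\<forall>w\<in>V0. w \<noteq> v0 \<longrightarrow> par0 w \<in> V0" and v0V: "v0 \<in> V0"
    using tree unfolding rooted_tree_def by auto
  show ?case using pv v0V start by auto
next
  case (Suc j)
  have pv: "\<forall>w\<in>V0. w \<noteq> v0 \<longrightarrow> par0 w \<in> V0"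
    using tree unfolding rooted_tree_def by auto
  have jm: "j < m" using Suc.prems by simp
  note IH = Suc.IH[OF less_imp_le[OF jm]]
  have st: "v (Suc j) \<in> succs (V j) (P j) (v j) (v j)"
       "V (Suc j) = V j - {v j}"
       "P (Suc j) = contract_par (P j) (v j) (v (Suc j))"
    using steps jm by auto
  let ?c = "v (Suc j)"
  have c1: "?c \<in> V j" "?c \<noteq> v j" "P j ?c = v j" using st(1) unfolding succs_def by auto
  have S1: "V (Suc j) - {?c} = V j - {v j, ?c}" using st(2) by auto
  have A: "V (Suc j) \<subseteq> V0" using IH st(2) by auto
  have B: "?c \<in> V (Suc j)" using c1 st(2) by auto
  have C: "v0 \<notin> V (Suc j) - {?c}" using IH S1 by auto
  have D: "\<forall>w\<in>V (Suc j) - {?c}. P (Suc j) w = (if par0 w \<in> V (Suc j) - {?c} then par0 w else ?c)"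
  proof
    fix w assume w: "w \<in> V (Suc j) - {?c}"
    hence w': "w \<in> V j - {v j}" "w \<noteq> ?c" using S1 by auto
    have Pw: "P j w = (if par0 w \<in> V j - {v j} then par0 w else v j)" using IH w' by auto
    show "P (Suc j) w = (if par0 w \<in> V (Suc j) - {?c} then par0 w else ?c)"
      using Pw S1 c1 unfolding st(3) contract_par_def by auto
  qed
  have E: "\<forall>w\<in>V0 - (V (Suc j) - {?c}). w \<noteq> v0 \<longrightarrow> par0 w \<in> V0 - (V (Suc j) - {?c})"
  proof (intro ballI impI)
    fix w assume w: "w \<in> V0 - (V (Suc j) - {?c})" and wv: "w \<noteq> v0"
    show "par0 w \<in> V0 - (V (Suc j) - {?c})"
    proof (cases "w = ?c")
      case True
      have "par0 w \<notin> V j - {v j}" using IH c1 True by auto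
      moreover have "par0 w \<in> V0" using pv w wv by auto
      ultimately show ?thesis using S1 by auto
    next
      case False
      hence "w \<in> V0 - (V j - {v j})" using w S1 by auto
      hence "par0 w \<in> V0 - (V j - {v j})" using IH wv by auto
      thus ?thesis using S1 by auto
    qed
  qed
  show ?case using A B C D E by blast
qed

theorem mainTheorem3:
  fixes V0 :: "'a set" and par0 :: "'a \<Rightarrow> 'a" and v0 :: 'a
    and r :: "'a \<Rightarrow> int" and n :: "'a \<Rightarrow> int"
    and V :: "nat \<Rightarrow> 'a set" and P :: "nat \<Rightarrow> 'a \<Rightarrow> 'a" and v :: "nat \<Rightarrow> 'a"
    and m :: nat
  assumes tree: "rooted_tree V0 par0 v0"
    and n_def: "\<forall>u\<in>V0. n u = r u + (\<Sum>w\<in>succs V0 par0 v0 u. max 0 (n w))"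
    and start: "V 0 = V0" "P 0 = par0" "v 0 = v0"
    and steps: "\<forall>i<m. v (Suc i) \<in> succs (V i) (P i) (v i) (v i)
                    \<and> V (Suc i) = V i - {v i}
                    \<and> P (Suc i) = contract_par (P i) (v i) (v (Suc i))"
    and i: "i < m"
  shows "(\<Sum>w\<in>succs (V (Suc i)) (P (Suc i)) (v (Suc i)) (v (Suc i)). max 0 (n w))
           + r (v (Suc i))
         \<le> (\<Sum>w\<in>succs (V i) (P i) (v i) (v i). max 0 (n w))"
proof -
  note IH = inv_lemma[OF tree start steps, of i]
  have I: "V i \<subseteq> V0" "v i \<in> V i" "v0 \<notin> V i - {v i}"
     "\<forall>w\<in>V i - {v i}. P i w = (if par0 w \<in> V i - {v i} then par0 w else v i)"
     "\<forall>w\<in>V0 - (V i - {v i}). w \<noteq> v0 \<longrightarrow> par0 w \<in> V0 - (V i - {v i})"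
    using IH i by auto
  have fin: "finite V0" using tree unfolding rooted_tree_def by auto
  have st: "v (Suc i) \<in> succs (V i) (P i) (v i) (v i)"
       "V (Suc i) = V i - {v i}"
       "P (Suc i) = contract_par (P i) (v i) (v (Suc i))"
    using steps i by auto
  define c where "c = v (Suc i)"
  have c1: "c \<in> V i" "c \<noteq> v i" "P i c = v i" using st(1) unfolding succs_def c_def by auto
  define A where "A = succs (V i) (P i) (v i) (v i) - {c}"
  define B where "B = {w \<in> V i. w \<noteq> v i \<and> P i w = c}"
  have split: "succs (V (Suc i)) (P (Suc i)) c c = A \<union> B"
    using c1 unfolding A_def B_def succs_def st(2) st(3) contract_par_def c_def[symmetric]
    by auto
  have disj: "A \<inter> B = {}" using c1 unfolding A_def B_def succs_def by auto
  have finA: "finite A" and finB: "finite B"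
    using fin I(1) unfolding A_def B_def succs_def by (auto intro: finite_subset)
  have Bch: "B = succs V0 par0 v0 c"
  proof
    show "B \<subseteq> succs V0 par0 v0 c"
    proof
      fix w assume w: "w \<in> B"
      hence "P i w = c" "w \<in> V i - {v i}" unfolding B_def by auto
      hence "par0 w = c" using I(4) c1 by (auto split: if_splits)
      thus "w \<in> succs V0 par0 v0 c" using w I(1,3) unfolding B_def succs_def by auto
    qed
  next
    show "succs V0 par0 v0 c \<subseteq> B"
    proof
      fix w assume w: "w \<in> succs V0 par0 v0 c"
      hence w1: "w \<in> V0" "w \<noteq> v0" "par0 w = c" unfolding succs_def by auto
      have wi: "w \<in> V i - {v i}"
      proof (rule ccontr)
        assume "w \<notin> V i - {v i}"
        hence "par0 w \<in> V0 - (V i - {v i})" using I(5) w1 by auto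
        thus False using w1 c1 by auto
      qed
      hence "P i w = c" using I(4) w1 c1 by auto
      thus "w \<in> B" using wi unfolding B_def by auto
    qed
  qed
  have cV0: "c \<in> V0" using c1 I(1) by auto
  have nc: "n c = r c + (\<Sum>w\<in>B. max 0 (n w))" using n_def cV0 Bch by auto
  have old: "succs (V i) (P i) (v i) (v i) = insert c A"
    using st(1) unfolding A_def c_def by auto
  have cA: "c \<notin> A" unfolding A_def by auto
  have "(\<Sum>w\<in>succs (V i) (P i) (v i) (v i). max 0 (n w)) = max 0 (n c) + (\<Sum>w\<in>A. max 0 (n w))"
    using old cA finA by simp
  moreover have "(\<Sum>w\<in>succs (V (Suc i)) (P (Suc i)) c c. max 0 (n w)) =
     (\<Sum>w\<in>A. max 0 (n w)) + (\<Sum>w\<in>B. max 0 (n w))"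
    using split disj finA finB by (simp add: sum.union_disjoint)
  ultimately show ?thesis using nc unfolding c_def by linarith
qed

end
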